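(* Let $\mathcal{T}$ be a $\operatorname{Hom}$-finite Krull–Schmidt triangulated category over an algebraically closed field, $\mathcal{I}$ a functorially finite ideal, and $X\xrightarrow{f}Y\xrightarrow{g}Z\xrightarrow{h}X[1]$ a triangle. Then (1) $g$ is a right $\mathcal{I}$-approximation (resp. an $\mathcal{I}$-sink map) if and only if $h$ is a left $\mathrm{Gh}_{\mathcal{I}}$-approximation (resp. a $\mathrm{Gh}_{\mathcal{I}}$-source map); (2) $f$ is a left $\mathcal{I}$-approximation (resp. an $\mathcal{I}$-source map) if and only if $h$ is a right $\mathrm{CoGh}_{\mathcal{I}[1]}$-approximation (resp. a $\mathrm{CoGh}_{\mathcal{I}[1]}$-sink map).
   Context: Composition of $f:X\to Y$, $g:Y\to Z$ is $gf$. An ideal: subgroups $\mathcal{I}(X,Y)\subseteq\operatorname{Hom}(X,Y)$ closed under composition. $\mathcal{I}[1]=\{f[1]:f\in\mathcal{I}\}$. $\mathrm{Gh}_{\mathcal{I}}=\{f: fi=0\ \forall\text{ composable } i\in\mathcal{I}\}$, $\mathrm{CoGh}_{\mathcal{I}}=\{f: if=0\ \forall\text{ composable } i\in\mathcal{I}\}$. For an ideal $\mathcal{A}$, a left (resp. right) $\mathcal{A}$-approximation of $T$ is a morphism in $\mathcal{A}$ starting (resp. ending) at $T$ through which all morphisms of $\mathcal{A}$ starting (resp. ending) at $T$ factor; $\mathcal{A}$ is functorially finite if all objects have both. An $\mathcal{A}$-source (resp. $\mathcal{A}$-sink) map is a left minimal left (resp. right minimal right) $\mathcal{A}$-approximation;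 $f$ is left minimal if $gf=f$ forces $g$ invertible, right minimal if $fg=f$ forces $g$ invertible. *)

theory Defs
  imports Main "HOL-Computational_Algebra.Polynomial"
begin

text \<open>A k-linear category with a shift functor and a class of distinguished triangles,
  given by explicit data.  cmp g f is the composite gf (first f, then g).\<close>

record ('o, 'm, 'k) tcat =
  Ob   :: "'o set"
  Mor  :: "'m set"
  dom  :: "'m \<Rightarrow> 'o"
  cod  :: "'m \<Rightarrow> 'o"
  cmp  :: "'m \<Rightarrow> 'm \<Rightarrow> 'm"
  idm  :: "'o \<Rightarrow> 'm"
  add  :: "'m \<Rightarrow> 'm \<Rightarrow> 'm"
  neg  :: "'m \<Rightarrow> 'm"
  zer  :: "'o \<Rightarrow> 'o \<Rightarrow> 'm"
  smul :: "'k \<Rightarrow> 'm \<Rightarrow> 'm"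
  shO  :: "'o \<Rightarrow> 'o"
  shM  :: "'m \<Rightarrow> 'm"
  tri  :: "('o \<times> 'o \<times> 'o \<times> 'm \<times> 'm \<times> 'm) set"

definition hom :: "('o, 'm, 'k, 'z) tcat_scheme \<Rightarrow> 'o \<Rightarrow> 'o \<Rightarrow> 'm set" where
  "hom C X Y = {f \<in> Mor C. dom C f = X \<and> cod C f = Y}"

definition category :: "('o, 'm, 'k, 'z) tcat_scheme \<Rightarrow> bool" where
  "category C \<longleftrightarrow>
     (\<forall>f \<in> Mor C. dom C f \<in> Ob C \<and> cod C f \<in> Ob C) \<and>
     (\<forall>X \<in> Ob C. idm C X \<in> hom C X X) \<and>
     (\<forall>X \<in> Ob C. \<forall>Y \<in> Ob C. \<forall>Z \<in> Ob C. \<forall>f \<in> hom C X Y. \<forall>g \<in> hom C Y Z.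
        cmp C g f \<in> hom C X Z) \<and>
     (\<forall>W \<in> Ob C. \<forall>X \<in> Ob C. \<forall>Y \<in> Ob C. \<forall>Z \<in> Ob C.
        \<forall>f \<in> hom C W X. \<forall>g \<in> hom C X Y. \<forall>h \<in> hom C Y Z.
        cmp C h (cmp C g f) = cmp C (cmp C h g) f) \<and>
     (\<forall>f \<in> Mor C. cmp C f (idm C (dom C f)) = f \<and> cmp C (idm C (cod C f)) f = f)"

definition iso :: "('o, 'm, 'k, 'z) tcat_scheme \<Rightarrow> 'm \<Rightarrow> bool" where
  "iso C f \<longleftrightarrow> f \<in> Mor C \<and>
     (\<exists>g \<in> hom C (cod C f) (dom C f).
        cmp C g f = idm C (dom C f) \<and> cmp C f g = idm C (cod C f))"

definition k_linear :: "('o, 'm, 'k::field, 'z) tcat_scheme \<Rightarrow> bool" where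
  "k_linear C \<longleftrightarrow>
     (\<forall>X \<in> Ob C. \<forall>Y \<in> Ob C.
        zer C X Y \<in> hom C X Y \<and>
        (\<forall>f \<in> hom C X Y. \<forall>g \<in> hom C X Y. add C f g \<in> hom C X Y) \<and>
        (\<forall>f \<in> hom C X Y. neg C f \<in> hom C X Y) \<and>
        (\<forall>a. \<forall>f \<in> hom C X Y. smul C a f \<in> hom C X Y) \<and>
        (\<forall>f \<in> hom C X Y. \<forall>g \<in> hom C X Y. \<forall>h \<in> hom C X Y.
           add C (add C f g) h = add C f (add C g h)) \<and>
        (\<forall>f \<in> hom C X Y. \<forall>g \<in> hom C X Y. add C f g = add C g f) \<and>
        (\<forall>f \<in> hom C X Y. add C f (zer C X Y) = f) \<and>
        (\<forall>f \<in> hom C X Y. add C f (neg C f) = zer C X Y) \<and>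
        (\<forall>a b. \<forall>f \<in> hom C X Y. smul C a (smul C b f) = smul C (a * b) f) \<and>
        (\<forall>f \<in> hom C X Y. smul C 1 f = f) \<and>
        (\<forall>a b. \<forall>f \<in> hom C X Y. smul C (a + b) f = add C (smul C a f) (smul C b f)) \<and>
        (\<forall>a. \<forall>f \<in> hom C X Y. \<forall>g \<in> hom C X Y.
           smul C a (add C f g) = add C (smul C a f) (smul C a g))) \<and>
     (\<forall>X \<in> Ob C. \<forall>Y \<in> Ob C. \<forall>Z \<in> Ob C. \<forall>f \<in> hom C X Y. \<forall>g \<in> hom C Y Z.
        (\<forall>f' \<in> hom C X Y. cmp C g (add C f f') = add C (cmp C g f) (cmp C g f')) \<and>
        (\<forall>g' \<in> hom C Y Z. cmp C (add C g g') f = add C (cmp C g f) (cmp C g' f)) \<and>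
        (\<forall>a. cmp C g (smul C a f) = smul C a (cmp C g f)) \<and>
        (\<forall>a. cmp C (smul C a g) f = smul C a (cmp C g f)))"

definition zero_object :: "('o, 'm, 'k, 'z) tcat_scheme \<Rightarrow> 'o \<Rightarrow> bool" where
  "zero_object C Z0 \<longleftrightarrow> Z0 \<in> Ob C \<and> idm C Z0 = zer C Z0 Z0"

definition additive :: "('o, 'm, 'k::field, 'z) tcat_scheme \<Rightarrow> bool" where
  "additive C \<longleftrightarrow> category C \<and> k_linear C \<and>
     (\<exists>Z0. zero_object C Z0) \<and>
     (\<forall>X \<in> Ob C. \<forall>Y \<in> Ob C. \<exists>S \<in> Ob C.
        \<exists>i1 \<in> hom C X S. \<exists>i2 \<in> hom C Y S. \<exists>p1 \<in> hom C S X. \<exists>p2 \<in> hom C S Y.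
          cmp C p1 i1 = idm C X \<and> cmp C p2 i2 = idm C Y \<and>
          cmp C p2 i1 = zer C X Y \<and> cmp C p1 i2 = zer C Y X \<and>
          add C (cmp C i1 p1) (cmp C i2 p2) = idm C S)"

definition shift_equivalence :: "('o, 'm, 'k, 'z) tcat_scheme \<Rightarrow> bool" where
  "shift_equivalence C \<longleftrightarrow>
     (\<forall>X \<in> Ob C. shO C X \<in> Ob C \<and> shM C (idm C X) = idm C (shO C X)) \<and>
     (\<forall>X \<in> Ob C. \<forall>Y \<in> Ob C. bij_betw (shM C) (hom C X Y) (hom C (shO C X) (shO C Y))) \<and>
     (\<forall>X \<in> Ob C. \<forall>Y \<in> Ob C. \<forall>Z \<in> Ob C. \<forall>f \<in> hom C X Y. \<forall>g \<in> hom C Y Z.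
        shM C (cmp C g f) = cmp C (shM C g) (shM C f)) \<and>
     (\<forall>X \<in> Ob C. \<forall>Y \<in> Ob C. \<forall>f \<in> hom C X Y.
        (\<forall>g \<in> hom C X Y. shM C (add C f g) = add C (shM C f) (shM C g)) \<and>
        (\<forall>a. shM C (smul C a f) = smul C a (shM C f))) \<and>
     (\<forall>Y \<in> Ob C. \<exists>X \<in> Ob C. \<exists>u \<in> hom C (shO C X) Y. iso C u)"

definition candidate_triangle ::
  "('o, 'm, 'k, 'z) tcat_scheme \<Rightarrow> 'o \<Rightarrow> 'o \<Rightarrow> 'o \<Rightarrow> 'm \<Rightarrow> 'm \<Rightarrow> 'm \<Rightarrow> bool" where
  "candidate_triangle C X Y Z f g h \<longleftrightarrow> X \<in> Ob C \<and> Y \<in> Ob C \<and> Z \<in> Ob C \<and>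
     f \<in> hom C X Y \<and> g \<in> hom C Y Z \<and> h \<in> hom C Z (shO C X)"

definition triangulated :: "('o, 'm, 'k::field, 'z) tcat_scheme \<Rightarrow> bool" where
  "triangulated C \<longleftrightarrow> additive C \<and> shift_equivalence C \<and>
     (\<forall>(X, Y, Z, f, g, h) \<in> tri C. candidate_triangle C X Y Z f g h) \<and>
     \<comment> \<open>TR1: closure under isomorphisms of triangles\<close>
     (\<forall>(X, Y, Z, f, g, h) \<in> tri C. \<forall>X' Y' Z' f' g' h' a b c.
        candidate_triangle C X' Y' Z' f' g' h' \<and>
        a \<in> hom C X X' \<and> b \<in> hom C Y Y' \<and> c \<in> hom C Z Z' \<and>
        iso C a \<and> iso C b \<and> iso C c \<and>
        cmp C b f = cmp C f' a \<and> cmp C c g = cmp C g' b \<and>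
        cmp C (shM C a) h = cmp C h' c
        \<longrightarrow> (X', Y', Z', f', g', h') \<in> tri C) \<and>
     \<comment> \<open>TR1: X --id--> X --> 0 --> X[1]\<close>
     (\<forall>X \<in> Ob C. \<forall>Z0. zero_object C Z0 \<longrightarrow>
        (X, X, Z0, idm C X, zer C X Z0, zer C Z0 (shO C X)) \<in> tri C) \<and>
     \<comment> \<open>TR1: every morphism embeds in a triangle\<close>
     (\<forall>f \<in> Mor C. \<exists>Z g h. (dom C f, cod C f, Z, f, g, h) \<in> tri C) \<and>
     \<comment> \<open>TR2: rotation\<close>
     (\<forall>X Y Z f g h. candidate_triangle C X Y Z f g h \<longrightarrow>
        ((X, Y, Z, f, g, h) \<in> tri C \<longleftrightarrow>
         (Y, Z, shO C X, g, h, neg C (shM C f)) \<in> tri C)) \<and>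
     \<comment> \<open>TR3: completion of morphisms of triangles\<close>
     (\<forall>(X, Y, Z, f, g, h) \<in> tri C. \<forall>(X', Y', Z', f', g', h') \<in> tri C.
        \<forall>a \<in> hom C X X'. \<forall>b \<in> hom C Y Y'. cmp C b f = cmp C f' a \<longrightarrow>
        (\<exists>c \<in> hom C Z Z'. cmp C c g = cmp C g' b \<and> cmp C (shM C a) h = cmp C h' c)) \<and>
     \<comment> \<open>TR4: octahedral axiom\<close>
     (\<forall>X Y Z Z' X' Y' f g u1 d1 u2 d2 u3 d3.
        (X, Y, Z', f, u1, d1) \<in> tri C \<and> (Y, Z, X', g, u2, d2) \<in> tri C \<and>
        (X, Z, Y', cmp C g f, u3, d3) \<in> tri C \<longrightarrow>
        (\<exists>a \<in> hom C Z' Y'. \<exists>b \<in> hom C Y' X'.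
           (Z', Y', X', a, b, cmp C (shM C u1) d2) \<in> tri C \<and>
           cmp C a u1 = cmp C u3 g \<and> cmp C d3 a = d1 \<and>
           cmp C b u3 = u2 \<and> cmp C d2 b = cmp C (shM C f) d3))"

fun msum :: "('o, 'm, 'k, 'z) tcat_scheme \<Rightarrow> 'o \<Rightarrow> 'o \<Rightarrow> 'm list \<Rightarrow> 'm" where
  "msum C X Y [] = zer C X Y"
| "msum C X Y (f # fs) = add C f (msum C X Y fs)"

definition hom_finite :: "('o, 'm, 'k::field, 'z) tcat_scheme \<Rightarrow> bool" where
  "hom_finite C \<longleftrightarrow> (\<forall>X \<in> Ob C. \<forall>Y \<in> Ob C. \<exists>B. set B \<subseteq> hom C X Y \<and>
      (\<forall>f \<in> hom C X Y. \<exists>cs. length cs = length B \<and>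
          f = msum C X Y (map2 (smul C) cs B)))"

definition local_object :: "('o, 'm, 'k, 'z) tcat_scheme \<Rightarrow> 'o \<Rightarrow> bool" where
  "local_object C X \<longleftrightarrow> X \<in> Ob C \<and> idm C X \<noteq> zer C X X \<and>
     (\<forall>a \<in> hom C X X. \<forall>b \<in> hom C X X. \<not> iso C a \<and> \<not> iso C b \<longrightarrow> \<not> iso C (add C a b))"

definition krull_schmidt :: "('o, 'm, 'k, 'z) tcat_scheme \<Rightarrow> bool" where
  "krull_schmidt C \<longleftrightarrow> (\<forall>X \<in> Ob C. \<exists>Xs ins prs.
     length ins = length Xs \<and> length prs = length Xs \<and>
     (\<forall>i < length Xs. local_object C (Xs ! i) \<and>
        ins ! i \<in> hom C (Xs ! i) X \<and> prs ! i \<in> hom C X (Xs ! i)) \<and>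
     (\<forall>i < length Xs. \<forall>j < length Xs.
        cmp C (prs ! i) (ins ! j) = (if i = j then idm C (Xs ! i) else zer C (Xs ! j) (Xs ! i))) \<and>
     msum C X X (map2 (cmp C) ins prs) = idm C X)"

definition alg_closed_field :: "'k::field itself \<Rightarrow> bool" where
  "alg_closed_field _ \<longleftrightarrow> (\<forall>p :: 'k poly. degree p \<ge> 1 \<longrightarrow> (\<exists>x. poly p x = 0))"

definition ideal :: "('o, 'm, 'k, 'z) tcat_scheme \<Rightarrow> 'm set \<Rightarrow> bool" where
  "ideal C I \<longleftrightarrow> I \<subseteq> Mor C \<and>
     (\<forall>X \<in> Ob C. \<forall>Y \<in> Ob C. zer C X Y \<in> I \<and>
        (\<forall>f \<in> I \<inter> hom C X Y. \<forall>g \<in> I \<inter> hom C X Y. add C f g \<in> I) \<and>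
        (\<forall>f \<in> I \<inter> hom C X Y. neg C f \<in> I)) \<and>
     (\<forall>f \<in> I. \<forall>g \<in> Mor C. dom C g = cod C f \<longrightarrow> cmp C g f \<in> I) \<and>
     (\<forall>f \<in> I. \<forall>g \<in> Mor C. cod C g = dom C f \<longrightarrow> cmp C f g \<in> I)"

definition shift_ideal :: "('o, 'm, 'k, 'z) tcat_scheme \<Rightarrow> 'm set \<Rightarrow> 'm set" where
  "shift_ideal C I = shM C ` I"

definition Gh :: "('o, 'm, 'k, 'z) tcat_scheme \<Rightarrow> 'm set \<Rightarrow> 'm set" where
  "Gh C I = {f \<in> Mor C. \<forall>i \<in> I. cod C i = dom C f \<longrightarrow>
                cmp C f i = zer C (dom C i) (cod C f)}"

definition CoGh :: "('o, 'm, 'k, 'z) tcat_scheme \<Rightarrow> 'm set \<Rightarrow> 'm set" where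
  "CoGh C I = {f \<in> Mor C. \<forall>i \<in> I. dom C i = cod C f \<longrightarrow>
                cmp C i f = zer C (dom C f) (cod C i)}"

definition left_approx :: "('o, 'm, 'k, 'z) tcat_scheme \<Rightarrow> 'm set \<Rightarrow> 'o \<Rightarrow> 'm \<Rightarrow> bool" where
  "left_approx C A T a \<longleftrightarrow> a \<in> A \<and> dom C a = T \<and>
     (\<forall>b \<in> A. dom C b = T \<longrightarrow> (\<exists>c \<in> hom C (cod C a) (cod C b). cmp C c a = b))"

definition right_approx :: "('o, 'm, 'k, 'z) tcat_scheme \<Rightarrow> 'm set \<Rightarrow> 'o \<Rightarrow> 'm \<Rightarrow> bool" where
  "right_approx C A T a \<longleftrightarrow> a \<in> A \<and> cod C a = T \<and>
     (\<forall>b \<in> A. cod C b = T \<longrightarrow> (\<exists>c \<in> hom C (dom C b) (dom C a). cmp C a c = b))"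

definition functorially_finite :: "('o, 'm, 'k, 'z) tcat_scheme \<Rightarrow> 'm set \<Rightarrow> bool" where
  "functorially_finite C A \<longleftrightarrow>
     (\<forall>T \<in> Ob C. (\<exists>a. left_approx C A T a) \<and> (\<exists>a. right_approx C A T a))"

definition left_minimal :: "('o, 'm, 'k, 'z) tcat_scheme \<Rightarrow> 'm \<Rightarrow> bool" where
  "left_minimal C f \<longleftrightarrow> (\<forall>g \<in> hom C (cod C f) (cod C f). cmp C g f = f \<longrightarrow> iso C g)"

definition right_minimal :: "('o, 'm, 'k, 'z) tcat_scheme \<Rightarrow> 'm \<Rightarrow> bool" where
  "right_minimal C f \<longleftrightarrow> (\<forall>g \<in> hom C (dom C f) (dom C f). cmp C f g = f \<longrightarrow> iso C g)"

definition source_map :: "('o, 'm, 'k, 'z) tcat_scheme \<Rightarrow> 'm set \<Rightarrow> 'o \<Rightarrow> 'm \<Rightarrow> bool" where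
  "source_map C A T a \<longleftrightarrow> left_approx C A T a \<and> left_minimal C a"

definition sink_map :: "('o, 'm, 'k, 'z) tcat_scheme \<Rightarrow> 'm set \<Rightarrow> 'o \<Rightarrow> 'm \<Rightarrow> bool" where
  "sink_map C A T a \<longleftrightarrow> right_approx C A T a \<and> right_minimal C a"

end

theory Submission
  imports Defs
begin

locale TC =
  fixes C :: "('o, 'm, 'k::field) tcat"
  assumes triC: "triangulated C"
begin

lemma addC: "additive C" using triC unfolding triangulated_def by blast
lemma catC: "category C" using addC unfolding additive_def by blast
lemma linC: "k_linear C" using addC unfolding additive_def by blast
lemma shC: "shift_equivalence C" using triC unfolding triangulated_def by blast

lemma hom_iff: "f \<in> hom C X Y \<longleftrightarrow> f \<in> Mor C \<and> dom C f = X \<and> cod C f = Y"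
  by (simp add: hom_def)

lemma mor_hom: "f \<in> Mor C \<Longrightarrow> f \<in> hom C (dom C f) (cod C f)"
  by (simp add: hom_def)

lemma hom_ob: assumes "f \<in> hom C X Y" shows "X \<in> Ob C" "Y \<in> Ob C"
proof -
  have "\<forall>f \<in> Mor C. dom C f \<in> Ob C \<and> cod C f \<in> Ob C" using catC unfolding category_def by blast
  then show "X \<in> Ob C" "Y \<in> Ob C" using assms unfolding hom_def by auto
qed

lemma cmp_hom: "f \<in> hom C X Y \<Longrightarrow> g \<in> hom C Y Z \<Longrightarrow> cmp C g f \<in> hom C X Z"
proof -
  assume a: "f \<in> hom C X Y" "g \<in> hom C Y Z"
  have "\<forall>X \<in> Ob C. \<forall>Y \<in> Ob C. \<forall>Z \<in> Ob C. \<forall>f \<in> hom C X Y. \<forall>g \<in> hom C Y Z.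
        cmp C g f \<in> hom C X Z" using catC unfolding category_def by blast
  then show ?thesis using a hom_ob by blast
qed

lemma assoc: "f \<in> hom C W X \<Longrightarrow> g \<in> hom C X Y \<Longrightarrow> h \<in> hom C Y Z \<Longrightarrow>
   cmp C h (cmp C g f) = cmp C (cmp C h g) f"
proof -
  assume a: "f \<in> hom C W X" "g \<in> hom C X Y" "h \<in> hom C Y Z"
  have "\<forall>W \<in> Ob C. \<forall>X \<in> Ob C. \<forall>Y \<in> Ob C. \<forall>Z \<in> Ob C.
        \<forall>f \<in> hom C W X. \<forall>g \<in> hom C X Y. \<forall>h \<in> hom C Y Z.
        cmp C h (cmp C g f) = cmp C (cmp C h g) f" using catC unfolding category_def by blast
  then show ?thesis using a hom_ob by blast
qed

lemma id_hom: "X \<in> Ob C \<Longrightarrow> idm C X \<in> hom C X X"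
  using catC unfolding category_def by blast

lemma id_l: "f \<in> hom C X Y \<Longrightarrow> cmp C (idm C Y) f = f"
  using catC unfolding category_def hom_def by blast
lemma id_r: "f \<in> hom C X Y \<Longrightarrow> cmp C f (idm C X) = f"
  using catC unfolding category_def hom_def by blast

lemma linXY: assumes "X \<in> Ob C" "Y \<in> Ob C"
  shows "zer C X Y \<in> hom C X Y \<and>
        (\<forall>f \<in> hom C X Y. \<forall>g \<in> hom C X Y. add C f g \<in> hom C X Y) \<and>
        (\<forall>f \<in> hom C X Y. neg C f \<in> hom C X Y) \<and>
        (\<forall>a. \<forall>f \<in> hom C X Y. smul C a f \<in> hom C X Y) \<and>
        (\<forall>f \<in> hom C X Y. \<forall>g \<in> hom C X Y. \<forall>h \<in> hom C X Y.
           add C (add C f g) h = add C f (add C g h)) \<and>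
        (\<forall>f \<in> hom C X Y. \<forall>g \<in> hom C X Y. add C f g = add C g f) \<and>
        (\<forall>f \<in> hom C X Y. add C f (zer C X Y) = f) \<and>
        (\<forall>f \<in> hom C X Y. add C f (neg C f) = zer C X Y) \<and>
        (\<forall>a b. \<forall>f \<in> hom C X Y. smul C a (smul C b f) = smul C (a * b) f) \<and>
        (\<forall>f \<in> hom C X Y. smul C 1 f = f) \<and>
        (\<forall>a b. \<forall>f \<in> hom C X Y. smul C (a + b) f = add C (smul C a f) (smul C b f)) \<and>
        (\<forall>a. \<forall>f \<in> hom C X Y. \<forall>g \<in> hom C X Y.
           smul C a (add C f g) = add C (smul C a f) (smul C a g))"
proof -
  have "\<forall>X \<in> Ob C. \<forall>Y \<in> Ob C.
        zer C X Y \<in> hom C X Y \<and>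
        (\<forall>f \<in> hom C X Y. \<forall>g \<in> hom C X Y. add C f g \<in> hom C X Y) \<and>
        (\<forall>f \<in> hom C X Y. neg C f \<in> hom C X Y) \<and>
        (\<forall>a. \<forall>f \<in> hom C X Y. smul C a f \<in> hom C X Y) \<and>
        (\<forall>f \<in> hom C X Y. \<forall>g \<in> hom C X Y. \<forall>h \<in> hom C X Y.
           add C (add C f g) h = add C f (add C g h)) \<and>
        (\<forall>f \<in> hom C X Y. \<forall>g \<in> hom C X Y. add C f g = add C g f) \<and>
        (\<forall>f \<in> hom C X Y. add C f (zer C X Y) = f) \<and>
        (\<forall>f \<in> hom C X Y. add C f (neg C f) = zer C X Y) \<and>
        (\<forall>a b. \<forall>f \<in> hom C X Y. smul C a (smul C b f) = smul C (a * b) f) \<and>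
        (\<forall>f \<in> hom C X Y. smul C 1 f = f) \<and>
        (\<forall>a b. \<forall>f \<in> hom C X Y. smul C (a + b) f = add C (smul C a f) (smul C b f)) \<and>
        (\<forall>a. \<forall>f \<in> hom C X Y. \<forall>g \<in> hom C X Y.
           smul C a (add C f g) = add C (smul C a f) (smul C a g))"
    using linC unfolding k_linear_def by (rule conjunct1)
  then show ?thesis using assms by (meson bspec)
qed

lemma linXYZ: assumes "X \<in> Ob C" "Y \<in> Ob C" "Z \<in> Ob C" "f \<in> hom C X Y" "g \<in> hom C Y Z"
  shows "(\<forall>f' \<in> hom C X Y. cmp C g (add C f f') = add C (cmp C g f) (cmp C g f')) \<and>
        (\<forall>g' \<in> hom C Y Z. cmp C (add C g g') f = add C (cmp C g f) (cmp C g' f)) \<and>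
        (\<forall>a. cmp C g (smul C a f) = smul C a (cmp C g f)) \<and>
        (\<forall>a. cmp C (smul C a g) f = smul C a (cmp C g f))"
proof -
  have "\<forall>X \<in> Ob C. \<forall>Y \<in> Ob C. \<forall>Z \<in> Ob C. \<forall>f \<in> hom C X Y. \<forall>g \<in> hom C Y Z.
        (\<forall>f' \<in> hom C X Y. cmp C g (add C f f') = add C (cmp C g f) (cmp C g f')) \<and>
        (\<forall>g' \<in> hom C Y Z. cmp C (add C g g') f = add C (cmp C g f) (cmp C g' f)) \<and>
        (\<forall>a. cmp C g (smul C a f) = smul C a (cmp C g f)) \<and>
        (\<forall>a. cmp C (smul C a g) f = smul C a (cmp C g f))"
    using linC unfolding k_linear_def by (rule conjunct2)
  then show ?thesis using assms by blast
qed

lemma zer_hom: "X \<in> Ob C \<Longrightarrow> Y \<in> Ob C \<Longrightarrow> zer C X Y \<in> hom C X Y"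
  using linXY by blast
lemma add_hom: assumes "f \<in> hom C X Y" "g \<in> hom C X Y" shows "add C f g \<in> hom C X Y"
  using linXY[OF hom_ob[OF assms(1)], THEN conjunct2, THEN conjunct1] assms by blast
lemma neg_hom: assumes "f \<in> hom C X Y" shows "neg C f \<in> hom C X Y"
  using linXY[OF hom_ob[OF assms(1)], THEN conjunct2, THEN conjunct2, THEN conjunct1] assms by blast
lemma add_assoc: assumes "f \<in> hom C X Y" "g \<in> hom C X Y" "h \<in> hom C X Y" shows
  "add C (add C f g) h = add C f (add C g h)"
  using linXY[OF hom_ob[OF assms(1)], THEN conjunct2, THEN conjunct2, THEN conjunct2, THEN conjunct2, THEN conjunct1] assms by blast
lemma add_comm: assumes "f \<in> hom C X Y" "g \<in> hom C X Y" shows "add C f g = add C g f"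
  using linXY[OF hom_ob[OF assms(1)], THEN conjunct2, THEN conjunct2, THEN conjunct2, THEN conjunct2, THEN conjunct2, THEN conjunct1] assms by blast
lemma add_zer: assumes "f \<in> hom C X Y" shows "add C f (zer C X Y) = f"
  using linXY[OF hom_ob[OF assms(1)], THEN conjunct2, THEN conjunct2, THEN conjunct2, THEN conjunct2, THEN conjunct2, THEN conjunct2, THEN conjunct1] assms by blast
lemma add_neg: assumes "f \<in> hom C X Y" shows "add C f (neg C f) = zer C X Y"
  using linXY[OF hom_ob[OF assms(1)], THEN conjunct2, THEN conjunct2, THEN conjunct2, THEN conjunct2, THEN conjunct2, THEN conjunct2, THEN conjunct2, THEN conjunct1] assms by blast
lemma cmp_add_r: assumes "f \<in> hom C X Y" "f' \<in> hom C X Y" "g \<in> hom C Y Z" shows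
  "cmp C g (add C f f') = add C (cmp C g f) (cmp C g f')"
  using linXYZ[OF hom_ob[OF assms(1)] hom_ob(2)[OF assms(3)] assms(1) assms(3), THEN conjunct1] assms by blast
lemma cmp_add_l: assumes "f \<in> hom C X Y" "g \<in> hom C Y Z" "g' \<in> hom C Y Z" shows
  "cmp C (add C g g') f = add C (cmp C g f) (cmp C g' f)"
  using linXYZ[OF hom_ob[OF assms(1)] hom_ob(2)[OF assms(2)] assms(1) assms(2), THEN conjunct2, THEN conjunct1] assms by blast


lemma zer_add: assumes "f \<in> hom C X Y" shows "add C (zer C X Y) f = f"
proof -
  have z: "zer C X Y \<in> hom C X Y" using hom_ob[OF assms] zer_hom by blast
  show ?thesis using add_comm[OF z assms] add_zer[OF assms] by simp
qed

lemma add_cancel: assumes a: "a \<in> hom C X Y" and b: "b \<in> hom C X Y" and c: "c \<in> hom C X Y"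
  and e: "add C a b = add C a c" shows "b = c"
proof -
  have na: "neg C a \<in> hom C X Y" using neg_hom[OF a] .
  have z: "add C (neg C a) a = zer C X Y" using add_comm[OF na a] add_neg[OF a] by simp
  have "add C (neg C a) (add C a b) = add C (neg C a) (add C a c)" using e by simp
  then have "add C (add C (neg C a) a) b = add C (add C (neg C a) a) c"
    using add_assoc[OF na a b] add_assoc[OF na a c] by simp
  then show ?thesis using z zer_add[OF b] zer_add[OF c] by simp
qed

lemma zero_unique: assumes a: "a \<in> hom C X Y" and e: "add C a a = a" shows "a = zer C X Y"
proof -
  have z: "zer C X Y \<in> hom C X Y" using hom_ob[OF a] zer_hom by blast
  have "add C a a = add C a (zer C X Y)" using e add_zer[OF a] by simp
  then show ?thesis using add_cancel[OF a a z] by simp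
qed

lemma neg_unique: assumes a: "a \<in> hom C X Y" and b: "b \<in> hom C X Y" and e: "add C a b = zer C X Y"
  shows "b = neg C a"
  using add_cancel[OF a b neg_hom[OF a]] e add_neg[OF a] by simp

lemma neg_neg: assumes a: "a \<in> hom C X Y" shows "neg C (neg C a) = a"
proof -
  have "add C (neg C a) a = zer C X Y" using add_comm[OF neg_hom[OF a] a] add_neg[OF a] by simp
  then show ?thesis using neg_unique[OF neg_hom[OF a] a] by simp
qed

lemma eq_diff: assumes a: "a \<in> hom C X Y" and b: "b \<in> hom C X Y"
  and e: "add C a (neg C b) = zer C X Y" shows "a = b"
proof -
  have "neg C b = neg C a" using neg_unique[OF a neg_hom[OF b] e] .
  then show ?thesis using neg_neg[OF a] neg_neg[OF b] by metis
qed

lemma neg_zer: assumes "X \<in> Ob C" "Y \<in> Ob C" shows "neg C (zer C X Y) = zer C X Y"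
proof -
  have z: "zer C X Y \<in> hom C X Y" using assms zer_hom by blast
  show ?thesis using neg_unique[OF z z add_zer[OF z]] by simp
qed

lemma cmp_zer_r: assumes g: "g \<in> hom C Y Z" and X: "X \<in> Ob C" shows "cmp C g (zer C X Y) = zer C X Z"
proof -
  have z: "zer C X Y \<in> hom C X Y" using X hom_ob[OF g] zer_hom by blast
  have "cmp C g (add C (zer C X Y) (zer C X Y)) = add C (cmp C g (zer C X Y)) (cmp C g (zer C X Y))"
    using cmp_add_r[OF z z g] .
  then show ?thesis using add_zer[OF z] zero_unique[OF cmp_hom[OF z g]] by simp
qed

lemma cmp_zer_l: assumes f: "f \<in> hom C X Y" and Z: "Z \<in> Ob C" shows "cmp C (zer C Y Z) f = zer C X Z"
proof -
  have z: "zer C Y Z \<in> hom C Y Z" using Z hom_ob[OF f] zer_hom by blast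
  have "cmp C (add C (zer C Y Z) (zer C Y Z)) f = add C (cmp C (zer C Y Z) f) (cmp C (zer C Y Z) f)"
    using cmp_add_l[OF f z z] .
  then show ?thesis using add_zer[OF z] zero_unique[OF cmp_hom[OF f z]] by simp
qed

lemma cmp_neg_r: assumes f: "f \<in> hom C X Y" and g: "g \<in> hom C Y Z"
  shows "cmp C g (neg C f) = neg C (cmp C g f)"
proof -
  have "add C (cmp C g f) (cmp C g (neg C f)) = cmp C g (add C f (neg C f))"
    using cmp_add_r[OF f neg_hom[OF f] g] by simp
  also have "\<dots> = zer C X Z" using add_neg[OF f] cmp_zer_r[OF g hom_ob(1)[OF f]] by simp
  finally show ?thesis using neg_unique[OF cmp_hom[OF f g] cmp_hom[OF neg_hom[OF f] g]] by simp
qed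

lemma cmp_neg_l: assumes f: "f \<in> hom C X Y" and g: "g \<in> hom C Y Z"
  shows "cmp C (neg C g) f = neg C (cmp C g f)"
proof -
  have "add C (cmp C g f) (cmp C (neg C g) f) = cmp C (add C g (neg C g)) f"
    using cmp_add_l[OF f g neg_hom[OF g]] by simp
  also have "\<dots> = zer C X Z" using add_neg[OF g] cmp_zer_l[OF f hom_ob(2)[OF g]] by simp
  finally show ?thesis using neg_unique[OF cmp_hom[OF f g] cmp_hom[OF f neg_hom[OF g]]] by simp
qed

lemma cmp_neg_neg: assumes f: "f \<in> hom C X Y" and g: "g \<in> hom C Y Z"
  shows "cmp C (neg C g) (neg C f) = cmp C g f"
  using cmp_neg_l[OF neg_hom[OF f] g] cmp_neg_r[OF f g] neg_neg[OF cmp_hom[OF f g]] by simp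

lemma neg_inj: assumes "a \<in> hom C X Y" "b \<in> hom C X Y" "neg C a = neg C b" shows "a = b"
  using assms neg_neg by metis

lemma sh1: "X \<in> Ob C \<Longrightarrow> shO C X \<in> Ob C \<and> shM C (idm C X) = idm C (shO C X)"
  using shC[unfolded shift_equivalence_def, THEN conjunct1] by (rule bspec)
lemma shO_ob: "X \<in> Ob C \<Longrightarrow> shO C X \<in> Ob C" using sh1 by blast
lemma shM_id: "X \<in> Ob C \<Longrightarrow> shM C (idm C X) = idm C (shO C X)" using sh1 by blast
lemma sh_bij: "X \<in> Ob C \<Longrightarrow> Y \<in> Ob C \<Longrightarrow> bij_betw (shM C) (hom C X Y) (hom C (shO C X) (shO C Y))"
  using shC[unfolded shift_equivalence_def, THEN conjunct2, THEN conjunct1] by blast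
lemma shM_hom: assumes "f \<in> hom C X Y" shows "shM C f \<in> hom C (shO C X) (shO C Y)"
  by (rule bij_betw_apply[OF sh_bij[OF hom_ob[OF assms]] assms])
lemma shM_inj: assumes "f \<in> hom C X Y" "g \<in> hom C X Y" "shM C f = shM C g" shows "f = g"
  by (rule inj_onD[OF bij_betw_imp_inj_on[OF sh_bij[OF hom_ob[OF assms(1)]]] assms(3) assms(1) assms(2)])
lemma shM_surj: assumes "X \<in> Ob C" "Y \<in> Ob C" "u \<in> hom C (shO C X) (shO C Y)"
  shows "\<exists>f \<in> hom C X Y. shM C f = u"
proof -
  have "shM C ` hom C X Y = hom C (shO C X) (shO C Y)" by (rule bij_betw_imp_surj_on[OF sh_bij[OF assms(1,2)]])
  then show ?thesis using assms(3) by (metis imageE)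
qed
lemma shM_cmp: assumes f: "f \<in> hom C X Y" and g: "g \<in> hom C Y Z"
  shows "shM C (cmp C g f) = cmp C (shM C g) (shM C f)"
proof -
  have "\<forall>X \<in> Ob C. \<forall>Y \<in> Ob C. \<forall>Z \<in> Ob C. \<forall>f \<in> hom C X Y. \<forall>g \<in> hom C Y Z.
        shM C (cmp C g f) = cmp C (shM C g) (shM C f)"
    using shC[unfolded shift_equivalence_def, THEN conjunct2, THEN conjunct2, THEN conjunct1] .
  then show ?thesis using f g hom_ob[OF f] hom_ob[OF g] by blast
qed
lemma shM_add: assumes f: "f \<in> hom C X Y" and g: "g \<in> hom C X Y"
  shows "shM C (add C f g) = add C (shM C f) (shM C g)"
proof -
  have "\<forall>X \<in> Ob C. \<forall>Y \<in> Ob C. \<forall>f \<in> hom C X Y.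
        (\<forall>g \<in> hom C X Y. shM C (add C f g) = add C (shM C f) (shM C g)) \<and>
        (\<forall>a. shM C (smul C a f) = smul C a (shM C f))"
    using shC[unfolded shift_equivalence_def, THEN conjunct2, THEN conjunct2, THEN conjunct2, THEN conjunct1] .
  then show ?thesis using f g hom_ob[OF f] by blast
qed
lemma shM_zer: assumes "X \<in> Ob C" "Y \<in> Ob C" shows "shM C (zer C X Y) = zer C (shO C X) (shO C Y)"
proof -
  have z: "zer C X Y \<in> hom C X Y" using assms zer_hom by blast
  have "shM C (add C (zer C X Y) (zer C X Y)) = add C (shM C (zer C X Y)) (shM C (zer C X Y))"
    using shM_add[OF z z] .
  then show ?thesis using add_zer[OF z] zero_unique[OF shM_hom[OF z]] by simp
qed
lemma shM_neg: assumes f: "f \<in> hom C X Y" shows "shM C (neg C f) = neg C (shM C f)"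
proof -
  have "add C (shM C f) (shM C (neg C f)) = shM C (add C f (neg C f))" using shM_add[OF f neg_hom[OF f]] by simp
  also have "\<dots> = zer C (shO C X) (shO C Y)" using add_neg[OF f] shM_zer hom_ob[OF f] by simp
  finally show ?thesis using neg_unique[OF shM_hom[OF f] shM_hom[OF neg_hom[OF f]]] by simp
qed

lemma iso_inv: assumes "iso C a" "a \<in> hom C X Y"
  shows "\<exists>b \<in> hom C Y X. cmp C b a = idm C X \<and> cmp C a b = idm C Y"
  using assms unfolding iso_def hom_def by auto
lemma isoI: assumes "a \<in> hom C X Y" "b \<in> hom C Y X" "cmp C b a = idm C X" "cmp C a b = idm C Y"
  shows "iso C a"
  using assms unfolding iso_def hom_def by auto
lemma iso_id: "X \<in> Ob C \<Longrightarrow> iso C (idm C X)"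
  using isoI id_hom id_l by metis

lemma iso_shM: assumes i: "iso C a" and a: "a \<in> hom C X Y" shows "iso C (shM C a)"
proof -
  obtain b where b: "b \<in> hom C Y X" "cmp C b a = idm C X" "cmp C a b = idm C Y" using iso_inv[OF i a] by blast
  show ?thesis
    using isoI[OF shM_hom[OF a] shM_hom[OF b(1)]] shM_cmp[OF a b(1)] shM_cmp[OF b(1) a] b
      shM_id hom_ob[OF a] by simp
qed

lemma iso_shM_rev: assumes a: "a \<in> hom C X Y" and i: "iso C (shM C a)" shows "iso C a"
proof -
  have X: "X \<in> Ob C" and Y: "Y \<in> Ob C" using hom_ob[OF a] by auto
  obtain u where u: "u \<in> hom C (shO C Y) (shO C X)" "cmp C u (shM C a) = idm C (shO C X)"
      "cmp C (shM C a) u = idm C (shO C Y)" using iso_inv[OF i shM_hom[OF a]] by blast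
  obtain b where b: "b \<in> hom C Y X" "shM C b = u" using shM_surj[OF Y X u(1)] by blast
  have 1: "cmp C b a = idm C X"
    using shM_inj[OF cmp_hom[OF a b(1)] id_hom[OF X]] shM_cmp[OF a b(1)] b u shM_id[OF X] by simp
  have 2: "cmp C a b = idm C Y"
    using shM_inj[OF cmp_hom[OF b(1) a] id_hom[OF Y]] shM_cmp[OF b(1) a] b u shM_id[OF Y] by simp
  show ?thesis using isoI[OF a b(1) 1 2] .
qed

lemma triD: "candidate_triangle C X Y Z f g h \<Longrightarrow> X \<in> Ob C \<and> Y \<in> Ob C \<and> Z \<in> Ob C \<and>
     f \<in> hom C X Y \<and> g \<in> hom C Y Z \<and> h \<in> hom C Z (shO C X)"
  unfolding candidate_triangle_def by assumption

lemma tri_cand: assumes "(X,Y,Z,f,g,h) \<in> tri C" shows "candidate_triangle C X Y Z f g h"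
proof -
  have "\<forall>(X, Y, Z, f, g, h) \<in> tri C. candidate_triangle C X Y Z f g h"
    using triC[unfolded triangulated_def, THEN conjunct2, THEN conjunct2, THEN conjunct1] .
  from bspec[OF this assms] show ?thesis by simp
qed

lemma tri_homs: assumes "(X,Y,Z,f,g,h) \<in> tri C"
  shows "X \<in> Ob C" "Y \<in> Ob C" "Z \<in> Ob C" "f \<in> hom C X Y" "g \<in> hom C Y Z" "h \<in> hom C Z (shO C X)"
  using tri_cand[OF assms] unfolding candidate_triangle_def by auto

lemma tri_zero: assumes "X \<in> Ob C" "zero_object C Z0"
  shows "(X, X, Z0, idm C X, zer C X Z0, zer C Z0 (shO C X)) \<in> tri C"
proof -
  have "\<forall>X \<in> Ob C. \<forall>Z0. zero_object C Z0 \<longrightarrow>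
        (X, X, Z0, idm C X, zer C X Z0, zer C Z0 (shO C X)) \<in> tri C"
    using triC[unfolded triangulated_def, THEN conjunct2, THEN conjunct2, THEN conjunct2,
      THEN conjunct2, THEN conjunct1] .
  then show ?thesis using assms by blast
qed

lemma tri_embed: assumes "f \<in> Mor C" shows "\<exists>Z g h. (dom C f, cod C f, Z, f, g, h) \<in> tri C"
proof -
  have "\<forall>f \<in> Mor C. \<exists>Z g h. (dom C f, cod C f, Z, f, g, h) \<in> tri C"
    using triC[unfolded triangulated_def, THEN conjunct2, THEN conjunct2, THEN conjunct2,
      THEN conjunct2, THEN conjunct2, THEN conjunct1] .
  then show ?thesis using assms by (rule bspec)
qed

lemma tri_rot_iff: assumes "candidate_triangle C X Y Z f g h"
  shows "(X, Y, Z, f, g, h) \<in> tri C \<longleftrightarrow> (Y, Z, shO C X, g, h, neg C (shM C f)) \<in> tri C"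
proof -
  have "\<forall>X Y Z f g h. candidate_triangle C X Y Z f g h \<longrightarrow>
        ((X, Y, Z, f, g, h) \<in> tri C \<longleftrightarrow>
         (Y, Z, shO C X, g, h, neg C (shM C f)) \<in> tri C)"
    using triC[unfolded triangulated_def, THEN conjunct2, THEN conjunct2, THEN conjunct2,
      THEN conjunct2, THEN conjunct2, THEN conjunct2, THEN conjunct1] .
  then show ?thesis using assms by blast
qed

lemma rot: assumes "(X, Y, Z, f, g, h) \<in> tri C" shows "(Y, Z, shO C X, g, h, neg C (shM C f)) \<in> tri C"
  using tri_rot_iff[OF tri_cand[OF assms]] assms by blast

lemma TR3: assumes T: "(X,Y,Z,f,g,h) \<in> tri C" and T': "(X',Y',Z',f',g',h') \<in> tri C"
  and a: "a \<in> hom C X X'" and b: "b \<in> hom C Y Y'" and e: "cmp C b f = cmp C f' a"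
  shows "\<exists>c \<in> hom C Z Z'. cmp C c g = cmp C g' b \<and> cmp C (shM C a) h = cmp C h' c"
proof -
  have R: "\<forall>(X, Y, Z, f, g, h) \<in> tri C. \<forall>(X', Y', Z', f', g', h') \<in> tri C.
        \<forall>a \<in> hom C X X'. \<forall>b \<in> hom C Y Y'. cmp C b f = cmp C f' a \<longrightarrow>
        (\<exists>c \<in> hom C Z Z'. cmp C c g = cmp C g' b \<and> cmp C (shM C a) h = cmp C h' c)"
    using triC[unfolded triangulated_def, THEN conjunct2, THEN conjunct2, THEN conjunct2,
      THEN conjunct2, THEN conjunct2, THEN conjunct2, THEN conjunct2, THEN conjunct1] .
  have "\<forall>(X', Y', Z', f', g', h') \<in> tri C.
        \<forall>a \<in> hom C X X'. \<forall>b \<in> hom C Y Y'. cmp C b f = cmp C f' a \<longrightarrow>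
        (\<exists>c \<in> hom C Z Z'. cmp C c g = cmp C g' b \<and> cmp C (shM C a) h = cmp C h' c)"
    using bspec[OF R T] by simp
  from bspec[OF this T'] have "\<forall>a \<in> hom C X X'. \<forall>b \<in> hom C Y Y'. cmp C b f = cmp C f' a \<longrightarrow>
        (\<exists>c \<in> hom C Z Z'. cmp C c g = cmp C g' b \<and> cmp C (shM C a) h = cmp C h' c)"
    by simp
  then show ?thesis using a b e by blast
qed

lemma zero_ex: "\<exists>Z0. zero_object C Z0"
  using addC unfolding additive_def by blast

lemma zero_ob: "zero_object C Z0 \<Longrightarrow> Z0 \<in> Ob C" unfolding zero_object_def by simp

lemma zero_sh: assumes z: "zero_object C Z0" shows "zero_object C (shO C Z0)"
proof -
  have Z: "Z0 \<in> Ob C" "idm C Z0 = zer C Z0 Z0" using z unfolding zero_object_def by auto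
  have "idm C (shO C Z0) = zer C (shO C Z0) (shO C Z0)"
    using shM_id[OF Z(1)] shM_zer[OF Z(1) Z(1)] Z(2) by simp
  then show ?thesis unfolding zero_object_def using shO_ob[OF Z(1)] by simp
qed

lemma comp_zero: assumes T: "(X,Y,Z,f,g,h) \<in> tri C" shows "cmp C g f = zer C X Z"
proof -
  obtain Z0 where z: "zero_object C Z0" using zero_ex by blast
  note H = tri_homs[OF T]
  have S: "(X, X, Z0, idm C X, zer C X Z0, zer C Z0 (shO C X)) \<in> tri C" using tri_zero[OF H(1) z] .
  obtain c where c: "c \<in> hom C Z0 Z" "cmp C c (zer C X Z0) = cmp C g f"
    using TR3[OF S T id_hom[OF H(1)] H(4)] by auto
  show ?thesis using c cmp_zer_r[OF c(1) H(1)] by simp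
qed

lemma comp_zero2: assumes T: "(X,Y,Z,f,g,h) \<in> tri C" shows "cmp C h g = zer C Y (shO C X)"
  using comp_zero[OF rot[OF T]] .

lemma comp_zero3: assumes T: "(X,Y,Z,f,g,h) \<in> tri C" shows "cmp C (shM C f) h = zer C Z (shO C Y)"
proof -
  note H = tri_homs[OF T]
  have "cmp C (neg C (shM C f)) h = zer C Z (shO C Y)" using comp_zero2[OF rot[OF T]] .
  then have "neg C (cmp C (shM C f) h) = neg C (zer C Z (shO C Y))"
    using cmp_neg_l[OF H(6) shM_hom[OF H(4)]] neg_zer[OF H(3) shO_ob[OF H(2)]] by simp
  then show ?thesis using neg_inj[OF cmp_hom[OF H(6) shM_hom[OF H(4)]] zer_hom[OF H(3) shO_ob[OF H(2)]]] by simp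
qed

lemma lift: assumes T: "(X,Y,Z,f,g,h) \<in> tri C" and i: "i \<in> hom C W Z"
  and e: "cmp C h i = zer C W (shO C X)"
  shows "\<exists>c \<in> hom C W Y. cmp C g c = i"
proof -
  obtain Z0 where z: "zero_object C Z0" using zero_ex by blast
  note H = tri_homs[OF T]
  have W: "W \<in> Ob C" using hom_ob[OF i] by simp
  have Z0: "Z0 \<in> Ob C" using zero_ob[OF z] .
  have S: "(W, Z0, shO C W, zer C W Z0, zer C Z0 (shO C W), neg C (shM C (idm C W))) \<in> tri C"
    using rot[OF tri_zero[OF W z]] .
  have Trr: "(Z, shO C X, shO C Y, h, neg C (shM C f), neg C (shM C g)) \<in> tri C"
    using rot[OF rot[OF T]] .
  have b: "zer C Z0 (shO C X) \<in> hom C Z0 (shO C X)" using zer_hom[OF Z0 shO_ob[OF H(1)]] .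
  have sq: "cmp C (zer C Z0 (shO C X)) (zer C W Z0) = cmp C h i"
    using cmp_zer_l[OF zer_hom[OF W Z0] shO_ob[OF H(1)]] e by simp
  obtain c where c: "c \<in> hom C (shO C W) (shO C Y)"
    "cmp C (shM C i) (neg C (shM C (idm C W))) = cmp C (neg C (shM C g)) c"
    using TR3[OF S Trr i b sq] by auto
  have "cmp C (shM C i) (neg C (shM C (idm C W))) = neg C (shM C i)"
    using shM_id[OF W] cmp_neg_r[OF id_hom[OF shO_ob[OF W]] shM_hom[OF i]] id_r[OF shM_hom[OF i]] by simp
  moreover have "cmp C (neg C (shM C g)) c = neg C (cmp C (shM C g) c)"
    using cmp_neg_l[OF c(1) shM_hom[OF H(5)]] .
  ultimately have "shM C i = cmp C (shM C g) c"
    using c(2) neg_inj[OF shM_hom[OF i] cmp_hom[OF c(1) shM_hom[OF H(5)]]] by simp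
  obtain c0 where c0: "c0 \<in> hom C W Y" "shM C c0 = c" using shM_surj[OF W H(2) c(1)] by blast
  have "shM C i = shM C (cmp C g c0)" using shM_cmp[OF c0(1) H(5)] c0(2) \<open>shM C i = _\<close> by simp
  then have "i = cmp C g c0" using shM_inj[OF i cmp_hom[OF c0(1) H(5)]] by simp
  then show ?thesis using c0(1) by blast
qed

lemma extend: assumes T: "(X,Y,Z,f,g,h) \<in> tri C" and b: "b \<in> hom C Y V"
  and e: "cmp C b f = zer C X V"
  shows "\<exists>c \<in> hom C Z V. cmp C c g = b"
proof -
  obtain Z0 where z: "zero_object C Z0" using zero_ex by blast
  note H = tri_homs[OF T]
  have V: "V \<in> Ob C" using hom_ob[OF b] by simp
  have Z0: "Z0 \<in> Ob C" using zero_ob[OF z] .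
  have Z1: "shO C Z0 \<in> Ob C" using shO_ob[OF Z0] .
  have cand: "candidate_triangle C Z0 V V (zer C Z0 V) (idm C V) (zer C V (shO C Z0))"
    unfolding candidate_triangle_def using Z0 V Z1 zer_hom id_hom by blast
  have "neg C (shM C (zer C Z0 V)) = zer C (shO C Z0) (shO C V)"
    using shM_zer[OF Z0 V] neg_zer[OF Z1 shO_ob[OF V]] by simp
  then have "(V, V, shO C Z0, idm C V, zer C V (shO C Z0), neg C (shM C (zer C Z0 V))) \<in> tri C"
    using tri_zero[OF V zero_sh[OF z]] by simp
  then have S: "(Z0, V, V, zer C Z0 V, idm C V, zer C V (shO C Z0)) \<in> tri C"
    using tri_rot_iff[OF cand] by blast
  have a: "zer C X Z0 \<in> hom C X Z0" using zer_hom[OF H(1) Z0] .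
  have sq: "cmp C b f = cmp C (zer C Z0 V) (zer C X Z0)"
    using cmp_zer_l[OF a V] e by simp
  obtain c where c: "c \<in> hom C Z V" "cmp C c g = cmp C (idm C V) b"
    using TR3[OF T S a b sq] by auto
  then show ?thesis using id_l[OF b] by auto
qed

lemma sq_zero_iso: assumes n: "n \<in> hom C Z Z" and nn: "cmp C n n = zer C Z Z"
  shows "iso C (add C (idm C Z) n)"
proof -
  have Z: "Z \<in> Ob C" using hom_ob[OF n] by simp
  note i = id_hom[OF Z]
  have mn: "neg C n \<in> hom C Z Z" using neg_hom[OF n] .
  have zz: "zer C Z Z \<in> hom C Z Z" using zer_hom[OF Z Z] .
  have p: "add C (idm C Z) n \<in> hom C Z Z" using add_hom[OF i n] .
  have m: "add C (idm C Z) (neg C n) \<in> hom C Z Z" using add_hom[OF i mn] .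
  have "cmp C (add C (idm C Z) n) (add C (idm C Z) (neg C n))
      = add C (cmp C (idm C Z) (add C (idm C Z) (neg C n))) (cmp C n (add C (idm C Z) (neg C n)))"
    using cmp_add_l[OF m i n] .
  also have "cmp C (idm C Z) (add C (idm C Z) (neg C n)) = add C (idm C Z) (neg C n)" using id_l[OF m] .
  also have "cmp C n (add C (idm C Z) (neg C n)) = add C (cmp C n (idm C Z)) (cmp C n (neg C n))"
    using cmp_add_r[OF i mn n] .
  also have "cmp C n (idm C Z) = n" using id_r[OF n] .
  also have "cmp C n (neg C n) = zer C Z Z" using cmp_neg_r[OF n n] nn neg_zer[OF Z Z] by simp
  also have "add C n (zer C Z Z) = n" using add_zer[OF n] .
  also have "add C (add C (idm C Z) (neg C n)) n = add C (idm C Z) (add C (neg C n) n)"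
    using add_assoc[OF i mn n] .
  also have "add C (neg C n) n = zer C Z Z" using add_comm[OF mn n] add_neg[OF n] by simp
  also have "add C (idm C Z) (zer C Z Z) = idm C Z" using add_zer[OF i] .
  finally have 1: "cmp C (add C (idm C Z) n) (add C (idm C Z) (neg C n)) = idm C Z" .
  have "cmp C (add C (idm C Z) (neg C n)) (add C (idm C Z) n)
      = add C (cmp C (idm C Z) (add C (idm C Z) n)) (cmp C (neg C n) (add C (idm C Z) n))"
    using cmp_add_l[OF p i mn] .
  also have "cmp C (idm C Z) (add C (idm C Z) n) = add C (idm C Z) n" using id_l[OF p] .
  also have "cmp C (neg C n) (add C (idm C Z) n) = add C (cmp C (neg C n) (idm C Z)) (cmp C (neg C n) n)"
    using cmp_add_r[OF i n mn] .
  also have "cmp C (neg C n) (idm C Z) = neg C n" using id_r[OF mn] .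
  also have "cmp C (neg C n) n = zer C Z Z" using cmp_neg_l[OF n n] nn neg_zer[OF Z Z] by simp
  also have "add C (neg C n) (zer C Z Z) = neg C n" using add_zer[OF mn] .
  also have "add C (add C (idm C Z) n) (neg C n) = add C (idm C Z) (add C n (neg C n))"
    using add_assoc[OF i n mn] .
  also have "add C n (neg C n) = zer C Z Z" using add_neg[OF n] .
  also have "add C (idm C Z) (zer C Z Z) = idm C Z" using add_zer[OF i] .
  finally have 2: "cmp C (add C (idm C Z) (neg C n)) (add C (idm C Z) n) = idm C Z" .
  show ?thesis using isoI[OF p m 2 1] .
qed

lemma unipotent_iso: assumes T: "(X,Y,Z,f,g,h) \<in> tri C" and e: "e \<in> hom C Z Z"
  and eg: "cmp C e g = g" and he: "cmp C h e = h"
  shows "iso C e"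
proof -
  note H = tri_homs[OF T]
  have i: "idm C Z \<in> hom C Z Z" using id_hom[OF H(3)] .
  define n where "n = add C e (neg C (idm C Z))"
  have n: "n \<in> hom C Z Z" unfolding n_def using add_hom[OF e neg_hom[OF i]] .
  have "cmp C n g = add C (cmp C e g) (cmp C (neg C (idm C Z)) g)"
    unfolding n_def using cmp_add_l[OF H(5) e neg_hom[OF i]] .
  also have "\<dots> = add C g (neg C g)" using eg cmp_neg_l[OF H(5) i] id_l[OF H(5)] by simp
  also have "\<dots> = zer C Y Z" using add_neg[OF H(5)] .
  finally have ng: "cmp C n g = zer C Y Z" .
  obtain k where k: "k \<in> hom C (shO C X) Z" "cmp C k h = n"
    using extend[OF rot[OF T] n ng] by blast
  have "cmp C h n = add C (cmp C h e) (cmp C h (neg C (idm C Z)))"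
    unfolding n_def using cmp_add_r[OF e neg_hom[OF i] H(6)] .
  also have "\<dots> = add C h (neg C h)" using he cmp_neg_r[OF i H(6)] id_r[OF H(6)] by simp
  also have "\<dots> = zer C Z (shO C X)" using add_neg[OF H(6)] .
  finally have hn: "cmp C h n = zer C Z (shO C X)" .
  obtain m where m: "m \<in> hom C Z Y" "cmp C g m = n" using lift[OF T n hn] by blast
  have "cmp C n n = cmp C (cmp C k h) (cmp C g m)" using k m by simp
  also have "\<dots> = cmp C k (cmp C h (cmp C g m))" using assoc[OF cmp_hom[OF m(1) H(5)] H(6) k(1)] by simp
  also have "cmp C h (cmp C g m) = cmp C (cmp C h g) m" using assoc[OF m(1) H(5) H(6)] .
  also have "\<dots> = zer C Z (shO C X)" using comp_zero2[OF T] cmp_zer_l[OF m(1) shO_ob[OF H(1)]] by simp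
  also have "cmp C k (zer C Z (shO C X)) = zer C Z Z" using cmp_zer_r[OF k(1) H(3)] .
  finally have nn: "cmp C n n = zer C Z Z" .
  have "add C (idm C Z) n = e"
  proof -
    have "add C (idm C Z) n = add C (idm C Z) (add C (neg C (idm C Z)) e)"
      unfolding n_def using add_comm[OF e neg_hom[OF i]] by simp
    also have "\<dots> = add C (add C (idm C Z) (neg C (idm C Z))) e" using add_assoc[OF i neg_hom[OF i] e] by simp
    also have "\<dots> = e" using add_neg[OF i] zer_add[OF e] by simp
    finally show ?thesis .
  qed
  then show ?thesis using sq_zero_iso[OF n nn] by simp
qed

lemma two_sided_iso: assumes c: "c \<in> hom C Z Z" and c': "c' \<in> hom C Z Z"
  and i1: "iso C (cmp C c' c)" and i2: "iso C (cmp C c c')"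
  shows "iso C c"
proof -
  have Z: "Z \<in> Ob C" using hom_ob[OF c] by simp
  obtain u1 where u1: "u1 \<in> hom C Z Z" "cmp C u1 (cmp C c' c) = idm C Z"
    using iso_inv[OF i1 cmp_hom[OF c c']] by blast
  obtain u2 where u2: "u2 \<in> hom C Z Z" "cmp C (cmp C c c') u2 = idm C Z"
    using iso_inv[OF i2 cmp_hom[OF c' c]] by blast
  define l where "l = cmp C u1 c'"
  define r where "r = cmp C c' u2"
  have l: "l \<in> hom C Z Z" unfolding l_def using cmp_hom[OF c' u1(1)] .
  have r: "r \<in> hom C Z Z" unfolding r_def using cmp_hom[OF u2(1) c'] .
  have lc: "cmp C l c = idm C Z" unfolding l_def using assoc[OF c c' u1(1)] u1(2) by simp
  have cr: "cmp C c r = idm C Z" unfolding r_def using assoc[OF u2(1) c' c] u2(2) by simp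
  have "l = cmp C l (cmp C c r)" using cr id_r[OF l] by simp
  also have "\<dots> = cmp C (cmp C l c) r" using assoc[OF r c l] .
  also have "\<dots> = r" using lc id_l[OF r] by simp
  finally have "l = r" .
  then show ?thesis using isoI[OF c l lc] cr by simp
qed

lemma core: assumes T: "(X,Y,Z,f,g,h) \<in> tri C"
  and a: "a \<in> hom C X X" and b: "b \<in> hom C Y Y" and c: "c \<in> hom C Z Z"
  and ia: "iso C a" and ib: "iso C b"
  and s1: "cmp C b f = cmp C f a" and s2: "cmp C c g = cmp C g b" and s3: "cmp C (shM C a) h = cmp C h c"
  shows "iso C c"
proof -
  note H = tri_homs[OF T]
  obtain a' where a': "a' \<in> hom C X X" "cmp C a' a = idm C X" "cmp C a a' = idm C X"
    using iso_inv[OF ia a] by blast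
  obtain b' where b': "b' \<in> hom C Y Y" "cmp C b' b = idm C Y" "cmp C b b' = idm C Y"
    using iso_inv[OF ib b] by blast
  have "cmp C b' f = cmp C b' (cmp C f (cmp C a a'))" using a'(3) id_r[OF H(4)] by simp
  also have "\<dots> = cmp C b' (cmp C (cmp C f a) a')" using assoc[OF a'(1) a H(4)] by simp
  also have "\<dots> = cmp C b' (cmp C (cmp C b f) a')" using s1 by simp
  also have "\<dots> = cmp C b' (cmp C b (cmp C f a'))" using assoc[OF a'(1) H(4) b] by simp
  also have "\<dots> = cmp C (cmp C b' b) (cmp C f a')" using assoc[OF cmp_hom[OF a'(1) H(4)] b b'(1)] by simp
  also have "\<dots> = cmp C f a'" using b'(2) id_l[OF cmp_hom[OF a'(1) H(4)]] by simp
  finally have s1': "cmp C b' f = cmp C f a'" .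
  obtain c' where c': "c' \<in> hom C Z Z" "cmp C c' g = cmp C g b'" "cmp C (shM C a') h = cmp C h c'"
    using TR3[OF T T a'(1) b'(1) s1'] by blast
  have shaa: "cmp C (shM C a') (shM C a) = idm C (shO C X)"
    using shM_cmp[OF a a'(1)] a'(2) shM_id[OF H(1)] by simp
  have shaa2: "cmp C (shM C a) (shM C a') = idm C (shO C X)"
    using shM_cmp[OF a'(1) a] a'(3) shM_id[OF H(1)] by simp
  have sa: "shM C a \<in> hom C (shO C X) (shO C X)" using shM_hom[OF a] .
  have sa': "shM C a' \<in> hom C (shO C X) (shO C X)" using shM_hom[OF a'(1)] .
  have e1g: "cmp C (cmp C c' c) g = g"
  proof -
    have "cmp C (cmp C c' c) g = cmp C c' (cmp C c g)" using assoc[OF H(5) c c'(1)] by simp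
    also have "\<dots> = cmp C c' (cmp C g b)" using s2 by simp
    also have "\<dots> = cmp C (cmp C c' g) b" using assoc[OF b H(5) c'(1)] .
    also have "\<dots> = cmp C (cmp C g b') b" using c'(2) by simp
    also have "\<dots> = cmp C g (cmp C b' b)" using assoc[OF b b'(1) H(5)] by simp
    also have "\<dots> = g" using b'(2) id_r[OF H(5)] by simp
    finally show ?thesis .
  qed
  have he1: "cmp C h (cmp C c' c) = h"
  proof -
    have "cmp C h (cmp C c' c) = cmp C (cmp C h c') c" using assoc[OF c c'(1) H(6)] .
    also have "\<dots> = cmp C (cmp C (shM C a') h) c" using c'(3) by simp
    also have "\<dots> = cmp C (shM C a') (cmp C h c)" using assoc[OF c H(6) sa'] by simp
    also have "\<dots> = cmp C (shM C a') (cmp C (shM C a) h)" using s3 by simp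
    also have "\<dots> = cmp C (cmp C (shM C a') (shM C a)) h" using assoc[OF H(6) sa sa'] .
    also have "\<dots> = h" using shaa id_l[OF H(6)] by simp
    finally show ?thesis .
  qed
  have e2g: "cmp C (cmp C c c') g = g"
  proof -
    have "cmp C (cmp C c c') g = cmp C c (cmp C c' g)" using assoc[OF H(5) c'(1) c] by simp
    also have "\<dots> = cmp C c (cmp C g b')" using c'(2) by simp
    also have "\<dots> = cmp C (cmp C c g) b'" using assoc[OF b'(1) H(5) c] .
    also have "\<dots> = cmp C (cmp C g b) b'" using s2 by simp
    also have "\<dots> = cmp C g (cmp C b b')" using assoc[OF b'(1) b H(5)] by simp
    also have "\<dots> = g" using b'(3) id_r[OF H(5)] by simp
    finally show ?thesis .
  qed
  have he2: "cmp C h (cmp C c c') = h"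
  proof -
    have "cmp C h (cmp C c c') = cmp C (cmp C h c) c'" using assoc[OF c'(1) c H(6)] .
    also have "\<dots> = cmp C (cmp C (shM C a) h) c'" using s3 by simp
    also have "\<dots> = cmp C (shM C a) (cmp C h c')" using assoc[OF c'(1) H(6) sa] by simp
    also have "\<dots> = cmp C (shM C a) (cmp C (shM C a') h)" using c'(3) by simp
    also have "\<dots> = cmp C (cmp C (shM C a) (shM C a')) h" using assoc[OF H(6) sa' sa] .
    also have "\<dots> = h" using shaa2 id_l[OF H(6)] by simp
    finally show ?thesis .
  qed
  have "iso C (cmp C c' c)" using unipotent_iso[OF T cmp_hom[OF c c'(1)] e1g he1] .
  moreover have "iso C (cmp C c c')" using unipotent_iso[OF T cmp_hom[OF c'(1) c] e2g he2] .
  ultimately show ?thesis using two_sided_iso[OF c c'(1)] by blast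
qed

lemma ideal_mor: "ideal C I \<Longrightarrow> i \<in> I \<Longrightarrow> i \<in> Mor C"
  unfolding ideal_def by blast
lemma ideal_post: "ideal C I \<Longrightarrow> f \<in> I \<Longrightarrow> g \<in> Mor C \<Longrightarrow> dom C g = cod C f \<Longrightarrow> cmp C g f \<in> I"
  unfolding ideal_def by blast
lemma ideal_pre: "ideal C I \<Longrightarrow> f \<in> I \<Longrightarrow> g \<in> Mor C \<Longrightarrow> cod C g = dom C f \<Longrightarrow> cmp C f g \<in> I"
  unfolding ideal_def by blast

lemma neg_shift_cancel: assumes c0: "c0 \<in> hom C W Y" and a: "a \<in> hom C X W" and f: "f \<in> hom C X Y"
  and e: "cmp C (shM C c0) (neg C (shM C a)) = shM C f"
  shows "f = cmp C (neg C c0) a"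
proof -
  have "cmp C (shM C c0) (neg C (shM C a)) = neg C (shM C (cmp C c0 a))"
    using cmp_neg_r[OF shM_hom[OF a] shM_hom[OF c0]] shM_cmp[OF a c0] by simp
  also have "\<dots> = shM C (neg C (cmp C c0 a))" using shM_neg[OF cmp_hom[OF a c0]] by simp
  also have "neg C (cmp C c0 a) = cmp C (neg C c0) a" using cmp_neg_l[OF a c0] by simp
  finally have "shM C f = shM C (cmp C (neg C c0) a)" using e by simp
  then show ?thesis using shM_inj[OF f cmp_hom[OF a neg_hom[OF c0]]] by simp
qed

lemma factor_shift: assumes I: "ideal C I" and i: "i \<in> shM C ` I" and di: "dom C i = shO C X"
  and X: "X \<in> Ob C" and a: "a \<in> hom C X W"
  and H: "\<forall>b\<in>I. dom C b = X \<longrightarrow> (\<exists>c\<in>hom C W (cod C b). cmp C c a = b)"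
  shows "\<exists>B c. c \<in> hom C W B \<and> i = cmp C (shM C c) (shM C a)"
proof -
  obtain j where j: "j \<in> I" "i = shM C j" using i by blast
  define A where "A = dom C j"
  define B where "B = cod C j"
  have jh: "j \<in> hom C A B" unfolding A_def B_def using mor_hom[OF ideal_mor[OF I j(1)]] .
  have A: "A \<in> Ob C" using hom_ob[OF jh] by simp
  have sj: "shM C j \<in> hom C (shO C A) (shO C B)" using shM_hom[OF jh] .
  then have eA: "shO C A = shO C X" using di j(2) unfolding hom_def by simp
  have "idm C (shO C X) \<in> hom C (shO C X) (shO C A)" using eA id_hom[OF shO_ob[OF X]] by simp
  then obtain u where u: "u \<in> hom C X A" "shM C u = idm C (shO C X)" using shM_surj[OF X A] by blast
  have ju: "cmp C j u \<in> I" using ideal_pre[OF I j(1)] u(1) jh unfolding hom_def by auto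
  have dju: "dom C (cmp C j u) = X" "cod C (cmp C j u) = B"
    using cmp_hom[OF u(1) jh] unfolding hom_def by auto
  obtain c where c: "c \<in> hom C W B" "cmp C c a = cmp C j u" using H ju dju by metis
  have "i = cmp C (shM C j) (idm C (shO C A))" using j(2) id_r[OF sj] by simp
  also have "\<dots> = cmp C (shM C j) (shM C u)" using u(2) eA by simp
  also have "\<dots> = shM C (cmp C j u)" using shM_cmp[OF u(1) jh] by simp
  also have "\<dots> = shM C (cmp C c a)" using c(2) by simp
  also have "\<dots> = cmp C (shM C c) (shM C a)" using shM_cmp[OF a c(1)] .
  finally show ?thesis using c(1) by blast
qed

lemma lift1: assumes T: "(X,Y,Z,f,g,h) \<in> tri C" and i: "i \<in> hom C W Y"
  and e: "cmp C g i = zer C W Z"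
  shows "\<exists>c \<in> hom C W X. cmp C f c = i"
proof -
  note H = tri_homs[OF T]
  have W: "W \<in> Ob C" using hom_ob[OF i] by simp
  have Trr: "(Z, shO C X, shO C Y, h, neg C (shM C f), neg C (shM C g)) \<in> tri C"
    using rot[OF rot[OF T]] .
  have si: "shM C i \<in> hom C (shO C W) (shO C Y)" using shM_hom[OF i] .
  have "cmp C (neg C (shM C g)) (shM C i) = neg C (shM C (cmp C g i))"
    using cmp_neg_l[OF si shM_hom[OF H(5)]] shM_cmp[OF i H(5)] by simp
  also have "\<dots> = zer C (shO C W) (shO C Z)"
    using e shM_zer[OF W H(3)] neg_zer[OF shO_ob[OF W] shO_ob[OF H(3)]] by simp
  finally obtain c where c: "c \<in> hom C (shO C W) (shO C X)" "cmp C (neg C (shM C f)) c = shM C i"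
    using lift[OF Trr si] by blast
  obtain c0 where c0: "c0 \<in> hom C W X" "shM C c0 = c" using shM_surj[OF W H(1) c(1)] by blast
  have "cmp C (neg C (shM C f)) c = neg C (shM C (cmp C f c0))"
    using cmp_neg_l[OF c(1) shM_hom[OF H(4)]] shM_cmp[OF c0(1) H(4)] c0(2) by simp
  also have "\<dots> = shM C (cmp C f (neg C c0))"
    using shM_neg[OF cmp_hom[OF c0(1) H(4)]] cmp_neg_r[OF c0(1) H(4)] by simp
  finally have "i = cmp C f (neg C c0)"
    using c(2) shM_inj[OF i cmp_hom[OF neg_hom[OF c0(1)] H(4)]] by simp
  then show ?thesis using neg_hom[OF c0(1)] by blast
qed

lemma part1_approx: assumes T: "(X,Y,Z,f,g,h) \<in> tri C" and I: "ideal C I"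
  and ff: "functorially_finite C I"
  shows "right_approx C I Z g \<longleftrightarrow> left_approx C (Gh C I) Z h"
proof
  note H = tri_homs[OF T]
  have dg: "dom C g = Y" "cod C g = Z" and dh: "dom C h = Z" "cod C h = shO C X"
    using H unfolding hom_def by auto
  assume ra: "right_approx C I Z g"
  have gI: "g \<in> I" using ra unfolding right_approx_def by blast
  have hGh: "h \<in> Gh C I" unfolding Gh_def
  proof (intro CollectI conjI ballI impI)
    show "h \<in> Mor C" using H(6) unfolding hom_def by simp
    fix i assume i: "i \<in> I" "cod C i = dom C h"
    have ih: "i \<in> hom C (dom C i) Z" using mor_hom[OF ideal_mor[OF I i(1)]] i(2) dh by simp
    obtain c where c: "c \<in> hom C (dom C i) Y" "cmp C g c = i"
      using ra i ih dg unfolding right_approx_def hom_def by auto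
    have "cmp C h i = cmp C (cmp C h g) c" using c(2) assoc[OF c(1) H(5) H(6)] by simp
    also have "\<dots> = zer C (dom C i) (shO C X)" using comp_zero2[OF T] cmp_zer_l[OF c(1) shO_ob[OF H(1)]] by simp
    finally show "cmp C h i = zer C (dom C i) (cod C h)" using dh by simp
  qed
  show "left_approx C (Gh C I) Z h" unfolding left_approx_def
  proof (intro conjI ballI impI)
    show "h \<in> Gh C I" using hGh .
    show "dom C h = Z" using dh by simp
    fix b assume b: "b \<in> Gh C I" "dom C b = Z"
    have bm: "b \<in> hom C Z (cod C b)" using b mor_hom unfolding Gh_def by auto
    have "cmp C b g = zer C (dom C g) (cod C b)" using b gI dg unfolding Gh_def by auto
    then have "cmp C b g = zer C Y (cod C b)" using dg by simp
    then obtain c where "c \<in> hom C (shO C X) (cod C b)" "cmp C c h = b"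
      using extend[OF rot[OF T] bm] by blast
    then show "\<exists>c\<in>hom C (cod C h) (cod C b). cmp C c h = b" using dh by auto
  qed
next
  note H = tri_homs[OF T]
  have dg: "dom C g = Y" "cod C g = Z" and dh: "dom C h = Z" "cod C h = shO C X"
    using H unfolding hom_def by auto
  assume la: "left_approx C (Gh C I) Z h"
  have hGh: "h \<in> Gh C I" using la unfolding left_approx_def by blast
  have hz: "\<And>i. i \<in> I \<Longrightarrow> cod C i = Z \<Longrightarrow> cmp C h i = zer C (dom C i) (shO C X)"
    using hGh dh unfolding Gh_def by auto
  obtain a where a: "right_approx C I Z a" using ff H(3) unfolding functorially_finite_def by blast
  define W where "W = dom C a"
  have aI: "a \<in> I" and ca: "cod C a = Z" using a unfolding right_approx_def by auto
  have ah: "a \<in> hom C W Z" unfolding W_def using mor_hom[OF ideal_mor[OF I aI]] ca by simp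
  obtain V p q where T2: "(W, Z, V, a, p, q) \<in> tri C"
    using tri_embed[OF ideal_mor[OF I aI]] ca unfolding W_def by metis
  note H2 = tri_homs[OF T2]
  have pGh: "p \<in> Gh C I" unfolding Gh_def
  proof (intro CollectI conjI ballI impI)
    show "p \<in> Mor C" using H2(5) unfolding hom_def by simp
    fix i assume i: "i \<in> I" "cod C i = dom C p"
    have cz: "cod C i = Z" using i(2) H2(5) unfolding hom_def by simp
    obtain c where c: "c \<in> hom C (dom C i) W" "cmp C a c = i"
      using a i(1) cz unfolding right_approx_def W_def by auto
    have "cmp C p i = cmp C (cmp C p a) c" using c(2) assoc[OF c(1) ah H2(5)] by simp
    also have "\<dots> = zer C (dom C i) V" using comp_zero[OF T2] cmp_zer_l[OF c(1) H2(3)] by simp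
    finally show "cmp C p i = zer C (dom C i) (cod C p)" using H2(5) unfolding hom_def by simp
  qed
  have dp: "dom C p = Z" "cod C p = V" using H2(5) unfolding hom_def by auto
  obtain c where c: "c \<in> hom C (shO C X) V" "cmp C c h = p"
    using la pGh dp dh unfolding left_approx_def by auto
  have "cmp C p g = cmp C c (cmp C h g)" using c(2) assoc[OF H(5) H(6) c(1)] by simp
  also have "\<dots> = zer C Y V" using comp_zero2[OF T] cmp_zer_r[OF c(1) H(2)] by simp
  finally obtain d where d: "d \<in> hom C Y W" "cmp C a d = g" using lift1[OF T2 H(5)] by blast
  have gI: "g \<in> I" using ideal_pre[OF I aI] d unfolding hom_def W_def by auto
  show "right_approx C I Z g" unfolding right_approx_def
  proof (intro conjI ballI impI)
    show "g \<in> I" using gI .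
    show "cod C g = Z" using dg by simp
    fix b assume b: "b \<in> I" "cod C b = Z"
    have bh: "b \<in> hom C (dom C b) Z" using mor_hom[OF ideal_mor[OF I b(1)]] b(2) by simp
    obtain c where "c \<in> hom C (dom C b) Y" "cmp C g c = b" using lift[OF T bh hz[OF b]] by blast
    then show "\<exists>c\<in>hom C (dom C b) (dom C g). cmp C g c = b" using dg by auto
  qed
qed

lemma part1_min: assumes T: "(X,Y,Z,f,g,h) \<in> tri C"
  shows "right_minimal C g \<longleftrightarrow> left_minimal C h"
proof -
  note H = tri_homs[OF T]
  have dg: "dom C g = Y" and dh: "cod C h = shO C X" using H unfolding hom_def by auto
  have Tr: "(Y, Z, shO C X, g, h, neg C (shM C f)) \<in> tri C" using rot[OF T] .
  have Trr: "(Z, shO C X, shO C Y, h, neg C (shM C f), neg C (shM C g)) \<in> tri C" using rot[OF Tr] .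
  have X1: "shO C X \<in> Ob C" and Y1: "shO C Y \<in> Ob C" using shO_ob H by auto
  have sf: "shM C f \<in> hom C (shO C X) (shO C Y)" using shM_hom[OF H(4)] .
  have sg: "shM C g \<in> hom C (shO C Y) (shO C Z)" using shM_hom[OF H(5)] .
  have iZ: "idm C Z \<in> hom C Z Z" using id_hom[OF H(3)] .
  show ?thesis
  proof
    assume rm: "right_minimal C g"
    show "left_minimal C h" unfolding left_minimal_def dh
    proof (intro ballI impI)
      fix \<phi> assume phi: "\<phi> \<in> hom C (shO C X) (shO C X)" "cmp C \<phi> h = h"
      have sq: "cmp C \<phi> h = cmp C h (idm C Z)" using phi(2) id_r[OF H(6)] by simp
      obtain c where c: "c \<in> hom C (shO C Y) (shO C Y)"
        "cmp C c (neg C (shM C f)) = cmp C (neg C (shM C f)) \<phi>"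
        "cmp C (shM C (idm C Z)) (neg C (shM C g)) = cmp C (neg C (shM C g)) c"
        using TR3[OF Trr Trr iZ phi(1) sq] by blast
      obtain \<psi> where psi: "\<psi> \<in> hom C Y Y" "shM C \<psi> = c" using shM_surj[OF H(2) H(2) c(1)] by blast
      have "neg C (shM C g) = neg C (cmp C (shM C g) c)"
        using c(3) shM_id[OF H(3)] id_l[OF neg_hom[OF sg]] cmp_neg_l[OF c(1) sg] by simp
      then have "shM C g = cmp C (shM C g) c" using neg_inj[OF sg cmp_hom[OF c(1) sg]] by simp
      then have "shM C g = shM C (cmp C g \<psi>)" using shM_cmp[OF psi(1) H(5)] psi(2) by simp
      then have gpsi: "g = cmp C g \<psi>" using shM_inj[OF H(5) cmp_hom[OF psi(1) H(5)]] by simp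
      have ipsi: "iso C \<psi>" using rm psi(1) gpsi dg unfolding right_minimal_def by auto
      show "iso C \<phi>"
        using core[OF Tr psi(1) iZ phi(1) ipsi iso_id[OF H(3)]] id_l[OF H(5)] gpsi sq psi(2) c(2) by simp
    qed
  next
    assume lm: "left_minimal C h"
    show "right_minimal C g" unfolding right_minimal_def dg
    proof (intro ballI impI)
      fix \<psi> assume psi: "\<psi> \<in> hom C Y Y" "cmp C g \<psi> = g"
      have sq: "cmp C (idm C Z) g = cmp C g \<psi>" using psi(2) id_l[OF H(5)] by simp
      obtain \<phi> where phi: "\<phi> \<in> hom C (shO C X) (shO C X)" "cmp C \<phi> h = cmp C h (idm C Z)"
        "cmp C (shM C \<psi>) (neg C (shM C f)) = cmp C (neg C (shM C f)) \<phi>"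
        using TR3[OF Tr Tr psi(1) iZ sq] by blast
      have iphi: "iso C \<phi>" using lm phi(1,2) id_r[OF H(6)] dh unfolding left_minimal_def by auto
      have spsi: "shM C \<psi> \<in> hom C (shO C Y) (shO C Y)" using shM_hom[OF psi(1)] .
      have s3: "cmp C (shM C (idm C Z)) (neg C (shM C g)) = cmp C (neg C (shM C g)) (shM C \<psi>)"
        using shM_id[OF H(3)] id_l[OF neg_hom[OF sg]] cmp_neg_l[OF spsi sg] shM_cmp[OF psi(1) H(5)] psi(2)
        by simp
      have "iso C (shM C \<psi>)"
        using core[OF Trr iZ phi(1) spsi iso_id[OF H(3)] iphi phi(2) phi(3) s3] .
      then show "iso C \<psi>" using iso_shM_rev[OF psi(1)] by simp
    qed
  qed
qed

lemma part2_min: assumes T: "(X,Y,Z,f,g,h) \<in> tri C"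
  shows "left_minimal C f \<longleftrightarrow> right_minimal C h"
proof -
  note H = tri_homs[OF T]
  have cf: "cod C f = Y" and dh: "dom C h = Z" using H unfolding hom_def by auto
  have Tr: "(Y, Z, shO C X, g, h, neg C (shM C f)) \<in> tri C" using rot[OF T] .
  have Trr: "(Z, shO C X, shO C Y, h, neg C (shM C f), neg C (shM C g)) \<in> tri C" using rot[OF Tr] .
  have X1: "shO C X \<in> Ob C" using shO_ob H by auto
  have sf: "shM C f \<in> hom C (shO C X) (shO C Y)" using shM_hom[OF H(4)] .
  have sg: "shM C g \<in> hom C (shO C Y) (shO C Z)" using shM_hom[OF H(5)] .
  have iX: "idm C X \<in> hom C X X" using id_hom[OF H(1)] .
  have iX1: "idm C (shO C X) \<in> hom C (shO C X) (shO C X)" using id_hom[OF X1] .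
  show ?thesis
  proof
    assume lm: "left_minimal C f"
    show "right_minimal C h" unfolding right_minimal_def dh
    proof (intro ballI impI)
      fix \<psi> assume psi: "\<psi> \<in> hom C Z Z" "cmp C h \<psi> = h"
      have sq: "cmp C (idm C (shO C X)) h = cmp C h \<psi>" using psi(2) id_l[OF H(6)] by simp
      obtain c where c: "c \<in> hom C (shO C Y) (shO C Y)"
        "cmp C c (neg C (shM C f)) = cmp C (neg C (shM C f)) (idm C (shO C X))"
        "cmp C (shM C \<psi>) (neg C (shM C g)) = cmp C (neg C (shM C g)) c"
        using TR3[OF Trr Trr psi(1) iX1 sq] by blast
      obtain \<beta> where beta: "\<beta> \<in> hom C Y Y" "shM C \<beta> = c" using shM_surj[OF H(2) H(2) c(1)] by blast
      have "neg C (cmp C c (shM C f)) = neg C (shM C f)"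
        using c(2) cmp_neg_r[OF sf c(1)] id_r[OF neg_hom[OF sf]] by simp
      then have "cmp C c (shM C f) = shM C f" using neg_inj[OF cmp_hom[OF sf c(1)] sf] by simp
      then have "shM C (cmp C \<beta> f) = shM C f" using shM_cmp[OF H(4) beta(1)] beta(2) by simp
      then have bf: "cmp C \<beta> f = f" using shM_inj[OF cmp_hom[OF H(4) beta(1)] H(4)] by simp
      have ib: "iso C \<beta>" using lm beta(1) bf cf unfolding left_minimal_def by auto
      have "neg C (cmp C (shM C \<psi>) (shM C g)) = neg C (cmp C (shM C g) c)"
        using c(3) cmp_neg_r[OF sg shM_hom[OF psi(1)]] cmp_neg_l[OF c(1) sg] by simp
      then have "cmp C (shM C \<psi>) (shM C g) = cmp C (shM C g) c"
        using neg_inj[OF cmp_hom[OF sg shM_hom[OF psi(1)]] cmp_hom[OF c(1) sg]] by simp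
      then have "shM C (cmp C \<psi> g) = shM C (cmp C g \<beta>)"
        using shM_cmp[OF H(5) psi(1)] shM_cmp[OF beta(1) H(5)] beta(2) by simp
      then have s2: "cmp C \<psi> g = cmp C g \<beta>"
        using shM_inj[OF cmp_hom[OF H(5) psi(1)] cmp_hom[OF beta(1) H(5)]] by simp
      have s1: "cmp C \<beta> f = cmp C f (idm C X)" using bf id_r[OF H(4)] by simp
      have s3: "cmp C (shM C (idm C X)) h = cmp C h \<psi>" using shM_id[OF H(1)] sq by simp
      show "iso C \<psi>" using core[OF T iX beta(1) psi(1) iso_id[OF H(1)] ib s1 s2 s3] .
    qed
  next
    assume rm: "right_minimal C h"
    show "left_minimal C f" unfolding left_minimal_def cf
    proof (intro ballI impI)
      fix \<beta> assume beta: "\<beta> \<in> hom C Y Y" "cmp C \<beta> f = f"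
      have s1: "cmp C \<beta> f = cmp C f (idm C X)" using beta(2) id_r[OF H(4)] by simp
      obtain \<psi> where psi: "\<psi> \<in> hom C Z Z" "cmp C \<psi> g = cmp C g \<beta>"
        "cmp C (shM C (idm C X)) h = cmp C h \<psi>"
        using TR3[OF T T iX beta(1) s1] by blast
      have hpsi: "cmp C h \<psi> = h" using psi(3) shM_id[OF H(1)] id_l[OF H(6)] by simp
      have ipsi: "iso C \<psi>" using rm psi(1) hpsi dh unfolding right_minimal_def by auto
      have sb: "shM C \<beta> \<in> hom C (shO C Y) (shO C Y)" using shM_hom[OF beta(1)] .
      have sp: "shM C \<psi> \<in> hom C (shO C Z) (shO C Z)" using shM_hom[OF psi(1)] .
      have q1: "cmp C (idm C (shO C X)) h = cmp C h \<psi>" using hpsi id_l[OF H(6)] by simp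
      have q2: "cmp C (shM C \<beta>) (neg C (shM C f)) = cmp C (neg C (shM C f)) (idm C (shO C X))"
        using cmp_neg_r[OF sf sb] shM_cmp[OF H(4) beta(1)] beta(2) id_r[OF neg_hom[OF sf]] by simp
      have q3: "cmp C (shM C \<psi>) (neg C (shM C g)) = cmp C (neg C (shM C g)) (shM C \<beta>)"
        using cmp_neg_r[OF sg sp] cmp_neg_l[OF sb sg] shM_cmp[OF H(5) psi(1)] shM_cmp[OF beta(1) H(5)] psi(2)
        by simp
      have "iso C (shM C \<beta>)" using core[OF Trr psi(1) iX1 sb ipsi iso_id[OF X1] q1 q2 q3] .
      then show "iso C \<beta>" using iso_shM_rev[OF beta(1)] by simp
    qed
  qed
qed

lemma CoGh_iff: "q \<in> CoGh C (shift_ideal C I) \<longleftrightarrow> q \<in> Mor C \<and>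
   (\<forall>i \<in> shM C ` I. dom C i = cod C q \<longrightarrow> cmp C i q = zer C (dom C q) (cod C i))"
  unfolding CoGh_def shift_ideal_def by simp

lemma part2_approx: assumes T: "(X,Y,Z,f,g,h) \<in> tri C" and I: "ideal C I"
  and ff: "functorially_finite C I"
  shows "left_approx C I X f \<longleftrightarrow> right_approx C (CoGh C (shift_ideal C I)) (shO C X) h"
proof
  note H = tri_homs[OF T]
  have df: "dom C f = X" "cod C f = Y" and dh: "dom C h = Z" "cod C h = shO C X"
    using H unfolding hom_def by auto
  have sf: "shM C f \<in> hom C (shO C X) (shO C Y)" using shM_hom[OF H(4)] .
  assume la: "left_approx C I X f"
  have fI: "f \<in> I" using la unfolding left_approx_def by blast
  have LH: "\<forall>b\<in>I. dom C b = X \<longrightarrow> (\<exists>c\<in>hom C Y (cod C b). cmp C c f = b)"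
    using la df unfolding left_approx_def by auto
  have hC: "h \<in> CoGh C (shift_ideal C I)" unfolding CoGh_iff
  proof (intro conjI ballI impI)
    show "h \<in> Mor C" using H(6) unfolding hom_def by simp
    fix i assume i: "i \<in> shM C ` I" "dom C i = cod C h"
    obtain B c where c: "c \<in> hom C Y B" "i = cmp C (shM C c) (shM C f)"
      using factor_shift[OF I i(1) _ H(1) H(4) LH] i(2) dh by auto
    have sc: "shM C c \<in> hom C (shO C Y) (shO C B)" using shM_hom[OF c(1)] .
    have "cmp C i h = cmp C (shM C c) (cmp C (shM C f) h)" using c(2) assoc[OF H(6) sf sc] by simp
    also have "\<dots> = zer C Z (shO C B)" using comp_zero3[OF T] cmp_zer_r[OF sc H(3)] by simp
    finally show "cmp C i h = zer C (dom C h) (cod C i)"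
      using c(2) cmp_hom[OF sf sc] dh unfolding hom_def by simp
  qed
  show "right_approx C (CoGh C (shift_ideal C I)) (shO C X) h" unfolding right_approx_def
  proof (intro conjI ballI impI)
    show "h \<in> CoGh C (shift_ideal C I)" using hC .
    show "cod C h = shO C X" using dh by simp
    fix b assume b: "b \<in> CoGh C (shift_ideal C I)" "cod C b = shO C X"
    have bm: "b \<in> hom C (dom C b) (shO C X)" using b unfolding CoGh_iff hom_def by auto
    have W: "dom C b \<in> Ob C" using hom_ob[OF bm] by simp
    have "shM C f \<in> shM C ` I" using fI by blast
    moreover have "dom C (shM C f) = shO C X" using sf unfolding hom_def by simp
    ultimately have "cmp C (shM C f) b = zer C (dom C b) (cod C (shM C f))"
      using b unfolding CoGh_iff by auto
    then have z: "cmp C (shM C f) b = zer C (dom C b) (shO C Y)" using sf unfolding hom_def by simp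
    have "cmp C (neg C (shM C f)) b = zer C (dom C b) (shO C Y)"
      using cmp_neg_l[OF bm sf] z neg_zer[OF W shO_ob[OF H(2)]] by simp
    then obtain c where "c \<in> hom C (dom C b) Z" "cmp C h c = b" using lift[OF rot[OF T] bm] by blast
    then show "\<exists>c\<in>hom C (dom C b) (dom C h). cmp C h c = b" using dh by auto
  qed
next
  note H = tri_homs[OF T]
  have df: "dom C f = X" "cod C f = Y" and dh: "dom C h = Z" "cod C h = shO C X"
    using H unfolding hom_def by auto
  have sf: "shM C f \<in> hom C (shO C X) (shO C Y)" using shM_hom[OF H(4)] .
  have Trr: "(Z, shO C X, shO C Y, h, neg C (shM C f), neg C (shM C g)) \<in> tri C" using rot[OF rot[OF T]] .
  assume ra: "right_approx C (CoGh C (shift_ideal C I)) (shO C X) h"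
  have hC: "h \<in> CoGh C (shift_ideal C I)" using ra unfolding right_approx_def by blast
  have hz: "\<And>i. i \<in> shM C ` I \<Longrightarrow> dom C i = shO C X \<Longrightarrow> cmp C i h = zer C Z (cod C i)"
    using hC dh unfolding CoGh_iff by auto
  obtain a where a: "left_approx C I X a" using ff H(1) unfolding functorially_finite_def by blast
  define W where "W = cod C a"
  have aI: "a \<in> I" and da: "dom C a = X" using a unfolding left_approx_def by auto
  have ah: "a \<in> hom C X W" unfolding W_def using mor_hom[OF ideal_mor[OF I aI]] da by simp
  have LH: "\<forall>b\<in>I. dom C b = X \<longrightarrow> (\<exists>c\<in>hom C W (cod C b). cmp C c a = b)"
    using a unfolding left_approx_def W_def by auto
  obtain V p q where T2: "(X, W, V, a, p, q) \<in> tri C"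
    using tri_embed[OF ideal_mor[OF I aI]] da unfolding W_def by metis
  note H2 = tri_homs[OF T2]
  have sa: "shM C a \<in> hom C (shO C X) (shO C W)" using shM_hom[OF ah] .
  have dq: "dom C q = V" "cod C q = shO C X" using H2(6) unfolding hom_def by auto
  have qC: "q \<in> CoGh C (shift_ideal C I)" unfolding CoGh_iff
  proof (intro conjI ballI impI)
    show "q \<in> Mor C" using H2(6) unfolding hom_def by simp
    fix i assume i: "i \<in> shM C ` I" "dom C i = cod C q"
    obtain B c where c: "c \<in> hom C W B" "i = cmp C (shM C c) (shM C a)"
      using factor_shift[OF I i(1) _ H(1) ah LH] i(2) dq by auto
    have sc: "shM C c \<in> hom C (shO C W) (shO C B)" using shM_hom[OF c(1)] .
    have "cmp C i q = cmp C (shM C c) (cmp C (shM C a) q)" using c(2) assoc[OF H2(6) sa sc] by simp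
    also have "\<dots> = zer C V (shO C B)" using comp_zero3[OF T2] cmp_zer_r[OF sc H2(3)] by simp
    finally show "cmp C i q = zer C (dom C q) (cod C i)"
      using c(2) cmp_hom[OF sa sc] dq unfolding hom_def by simp
  qed
  obtain d where d: "d \<in> hom C V Z" "cmp C h d = q"
    using ra qC dq dh unfolding right_approx_def by auto
  have "cmp C (shM C f) q = cmp C (cmp C (shM C f) h) d" using d(2) assoc[OF d(1) H(6) sf] by simp
  also have "\<dots> = zer C V (shO C Y)" using comp_zero3[OF T] cmp_zer_l[OF d(1) shO_ob[OF H(2)]] by simp
  finally obtain c where c: "c \<in> hom C (shO C W) (shO C Y)" "cmp C c (neg C (shM C a)) = shM C f"
    using extend[OF rot[OF rot[OF T2]] sf] by blast
  obtain c0 where c0: "c0 \<in> hom C W Y" "shM C c0 = c" using shM_surj[OF H2(2) H(2) c(1)] by blast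
  have feq: "f = cmp C (neg C c0) a" using neg_shift_cancel[OF c0(1) ah H(4)] c(2) c0(2) by simp
  have fI: "f \<in> I" using ideal_post[OF I aI] neg_hom[OF c0(1)] feq unfolding hom_def W_def by auto
  show "left_approx C I X f" unfolding left_approx_def
  proof (intro conjI ballI impI)
    show "f \<in> I" using fI .
    show "dom C f = X" using df by simp
    fix b assume b: "b \<in> I" "dom C b = X"
    define B where "B = cod C b"
    have bh: "b \<in> hom C X B" using mor_hom[OF ideal_mor[OF I b(1)]] b(2) unfolding B_def by simp
    have sb: "shM C b \<in> hom C (shO C X) (shO C B)" using shM_hom[OF bh] .
    have "shM C b \<in> shM C ` I" using b(1) by blast
    moreover have "dom C (shM C b) = shO C X" "cod C (shM C b) = shO C B" using sb unfolding hom_def by auto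
    ultimately have "cmp C (shM C b) h = zer C Z (shO C B)" using hz by metis
    then obtain e where e: "e \<in> hom C (shO C Y) (shO C B)" "cmp C e (neg C (shM C f)) = shM C b"
      using extend[OF Trr sb] by blast
    obtain e0 where e0: "e0 \<in> hom C Y B" "shM C e0 = e" using shM_surj[OF H(2) hom_ob(2)[OF bh] e(1)] by blast
    have "b = cmp C (neg C e0) f" using neg_shift_cancel[OF e0(1) H(4) bh] e(2) e0(2) by simp
    then show "\<exists>c\<in>hom C (cod C f) (cod C b). cmp C c f = b" using neg_hom[OF e0(1)] df B_def by auto
  qed
qed
end

theorem lemma3p7:
  fixes C :: "('o, 'm, 'k::field) tcat"
    and I :: "'m set"
  assumes "alg_closed_field TYPE('k)"
    and "triangulated C" and "hom_finite C" and "krull_schmidt C"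
    and "ideal C I" and "functorially_finite C I"
    and "(X, Y, Z, f, g, h) \<in> tri C"
  shows "(right_approx C I Z g \<longleftrightarrow> left_approx C (Gh C I) Z h)
       \<and> (sink_map C I Z g \<longleftrightarrow> source_map C (Gh C I) Z h)
       \<and> (left_approx C I X f \<longleftrightarrow> right_approx C (CoGh C (shift_ideal C I)) (shO C X) h)
       \<and> (source_map C I X f \<longleftrightarrow> sink_map C (CoGh C (shift_ideal C I)) (shO C X) h)"
proof -
  interpret TC C by (rule TC.intro) (rule assms(2))
  have 1: "right_approx C I Z g \<longleftrightarrow> left_approx C (Gh C I) Z h"
    using part1_approx[OF assms(7) assms(5) assms(6)] .
  have 2: "right_minimal C g \<longleftrightarrow> left_minimal C h" using part1_min[OF assms(7)] .
  have 3: "left_approx C I X f \<longleftrightarrow> right_approx C (CoGh C (shift_ideal C I)) (shO C X) h"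
    using part2_approx[OF assms(7) assms(5) assms(6)] .
  have 4: "left_minimal C f \<longleftrightarrow> right_minimal C h" using part2_min[OF assms(7)] .
  show ?thesis using 1 2 3 4 unfolding sink_map_def source_map_def by blast
qed

end
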